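(* For a greedy policy: (i) for all $t\ge1$ and $n\ge(2+\gamma/\mu)^2$, $$\Pr\left(\left|\frac{R_{\mathbf G}(n)-n/2}{\sqrt n}\right|>t\right)\le 2\exp\left\{-\left(\frac{\mu}{2\gamma}\right)^2t\right\};$$ (ii) with $T_n:=\min\bigl(n,\inf\{k\ge1: S_{\mathbf G}(k+1)=\lceil n/2\rceil+1\ \text{or}\ R_{\mathbf G}(k+1)=\lceil n/2\rceil+1\}\bigr)$, the sequence $\left\{\left(\frac{n-T_n}{\sqrt n}\right)^2\right\}_{n\ge1}$ is uniformly integrable.
   Context: Let $(r_i)_{i\ge1}$, $(s_i)_{i\ge1}$ be probability vectors on the positive integers with $\mu:=\sum_i r_is_i>0$, and $\gamma:=\sup_i r_i\vee\sup_i s_i$. Let $\{L_{\mathbf R}(n)\}_{n\ge1}$, $\{L_{\mathbf S}(n)\}_{n\ge1}$ be independent i.i.d. sequences with $\Pr(L_{\mathbf R}(1)=i)=r_i$, $\Pr(L_{\mathbf S}(1)=i)=s_i$. Put $X_{\mathbf R}(n)=s_{L_{\mathbf R}(n)}$, $X_{\mathbf S}(n)=r_{L_{\mathbf S}(n)}$, and $\Gamma_{\mathbf R}[m]=\sum_{j=1}^mX_{\mathbf R}(j)$, $\Gamma_{\mathbf S}[m]=\sum_{j=1}^mX_{\mathbf S}(j)$. A reading policy is a $\{0,1\}$-valued process $C(n)$ ($C(n)=1$ iff the $n$-th record is read from $\mathbf R$), $R(n)=\sum_{j\le n}C(j)$, $S(n)=n-R(n)$, with $C(n)$ being $\mathcal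 F_{n-1}$-measurable where $\mathcal F_n=\mathcal F_0\vee\sigma(L_{\mathbf R}(1),\dots,L_{\mathbf R}(R(n));L_{\mathbf S}(1),\dots,L_{\mathbf S}(S(n)))$ and $\mathcal F_0$ (randomization) is independent of the labels. A greedy policy satisfies, for $n\ge1$, $C(n+1)=1$ if $\Gamma_{\mathbf S}[S(n)]>\Gamma_{\mathbf R}[R(n)]$ and $C(n+1)=0$ if $\Gamma_{\mathbf S}[S(n)]<\Gamma_{\mathbf R}[R(n)]$ (ties arbitrary); $R_{\mathbf G},S_{\mathbf G}$ denote its $R,S$. *)

theory Defs
  imports "HOL-Probability.Probability"
begin

text \<open>Index of the independent family: the randomization sigma-algebra and the
 labels of the two files.\<close>
datatype src = Rand | LabR nat | LabS nat

text \<open>Number of records read from R among the first n reads (C j = True iff the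
 j-th record is read from R).\<close>
definition Rcnt :: "(nat \<Rightarrow> 'a \<Rightarrow> bool) \<Rightarrow> nat \<Rightarrow> 'a \<Rightarrow> nat" where
  "Rcnt C n \<omega> = card {j\<in>{1..n}. C j \<omega>}"

definition Scnt :: "(nat \<Rightarrow> 'a \<Rightarrow> bool) \<Rightarrow> nat \<Rightarrow> 'a \<Rightarrow> nat" where
  "Scnt C n \<omega> = n - Rcnt C n \<omega>"

definition Gam :: "(nat \<Rightarrow> 'a \<Rightarrow> real) \<Rightarrow> nat \<Rightarrow> 'a \<Rightarrow> real" where
  "Gam X m \<omega> = (\<Sum>j=1..m. X j \<omega>)"

text \<open>Observed history after n reads: how many records were read from R, and the
 labels read so far from R and from S (unread positions are masked by 0).\<close>
definition hist :: "(nat \<Rightarrow> 'a \<Rightarrow> bool) \<Rightarrow> (nat \<Rightarrow> 'a \<Rightarrow> nat) \<Rightarrow> (nat \<Rightarrow> 'a \<Rightarrow> nat)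
    \<Rightarrow> nat \<Rightarrow> 'a \<Rightarrow> nat \<times> (nat \<Rightarrow> nat) \<times> (nat \<Rightarrow> nat)" where
  "hist C LR LS n \<omega> = (Rcnt C n \<omega>,
      (\<lambda>j. if 1 \<le> j \<and> j \<le> Rcnt C n \<omega> then LR j \<omega> else 0),
      (\<lambda>j. if 1 \<le> j \<and> j \<le> Scnt C n \<omega> then LS j \<omega> else 0))"

definition filt :: "'a measure \<Rightarrow> 'a measure \<Rightarrow> (nat \<Rightarrow> 'a \<Rightarrow> bool) \<Rightarrow> (nat \<Rightarrow> 'a \<Rightarrow> nat)
    \<Rightarrow> (nat \<Rightarrow> 'a \<Rightarrow> nat) \<Rightarrow> nat \<Rightarrow> 'a set set" where
  "filt M F0 C LR LS n = sigma_sets (space M)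
      (sets F0 \<union> {hist C LR LS n -` A \<inter> space M | A. True})"

definition reading_policy where
  "reading_policy M F0 C LR LS \<longleftrightarrow>
     (\<forall>n\<ge>1. {\<omega>\<in>space M. C n \<omega>} \<in> filt M F0 C LR LS (n - 1))"

definition greedy :: "'a measure \<Rightarrow> (nat \<Rightarrow> real) \<Rightarrow> (nat \<Rightarrow> real) \<Rightarrow> (nat \<Rightarrow> 'a \<Rightarrow> bool) \<Rightarrow> (nat \<Rightarrow> 'a \<Rightarrow> nat) \<Rightarrow> (nat \<Rightarrow> 'a \<Rightarrow> nat) \<Rightarrow> bool" where
  "greedy M r s C LR LS \<longleftrightarrow> (\<forall>n\<ge>1. \<forall>\<omega>\<in>space M.
     (Gam (\<lambda>j w. r (LS j w)) (Scnt C n \<omega>) \<omega> > Gam (\<lambda>j w. s (LR j w)) (Rcnt C n \<omega>) \<omega>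
        \<longrightarrow> C (Suc n) \<omega>) \<and>
     (Gam (\<lambda>j w. r (LS j w)) (Scnt C n \<omega>) \<omega> < Gam (\<lambda>j w. s (LR j w)) (Rcnt C n \<omega>) \<omega>
        \<longrightarrow> \<not> C (Suc n) \<omega>))"

definition Tn :: "(nat \<Rightarrow> 'a \<Rightarrow> bool) \<Rightarrow> nat \<Rightarrow> 'a \<Rightarrow> nat" where
  "Tn C n \<omega> = (let P = (\<lambda>k. 1 \<le> k \<and> (Scnt C (k+1) \<omega> = nat \<lceil>real n / 2\<rceil> + 1
                                    \<or> Rcnt C (k+1) \<omega> = nat \<lceil>real n / 2\<rceil> + 1))
                in if \<exists>k. P k then min n (LEAST k. P k) else n)"

definition unif_integrable :: "'a measure \<Rightarrow> nat set \<Rightarrow> (nat \<Rightarrow> 'a \<Rightarrow> real) \<Rightarrow> bool" where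
  "unif_integrable M I Y \<longleftrightarrow> (\<forall>n\<in>I. Y n \<in> borel_measurable M) \<and>
     ((\<lambda>K::real. SUP n\<in>I. \<integral>\<^sup>+ \<omega>. ennreal \<bar>Y n \<omega>\<bar> * indicator {\<omega>. \<bar>Y n \<omega>\<bar> > K} \<omega> \<partial>M)
        \<longlongrightarrow> 0) at_top"

end

theory Submission imports Defs begin


lemma (in prob_space) lab_AE_nz:
  fixes X :: "'a \<Rightarrow> nat" and f :: "nat \<Rightarrow> real"
  assumes X[measurable]: "X \<in> measurable M (count_space UNIV)"
    and fs: "(\<lambda>i. f (Suc i)) sums 1"
    and dist: "\<forall>i\<ge>1. prob {\<omega>\<in>space M. X \<omega> = i} = f i"
  shows "AE \<omega> in M. X \<omega> \<noteq> 0"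
proof -
  define A where "A i = {\<omega>\<in>space M. X \<omega> = Suc i}" for i
  have "range A \<subseteq> sets M" unfolding A_def by auto
  moreover have "disjoint_family A" unfolding A_def disjoint_family_on_def by auto
  ultimately have "(\<lambda>i. prob (A i)) sums prob (\<Union>i. A i)"
    by (intro measure_UNION) auto
  moreover have "(\<lambda>i. prob (A i)) = (\<lambda>i. f (Suc i))"
    using dist unfolding A_def by auto
  ultimately have "prob (\<Union>i. A i) = 1" using fs sums_unique2 by metis
  moreover have "(\<Union>i. A i) = {\<omega>\<in>space M. X \<omega> \<noteq> 0}"
    unfolding A_def by (auto simp: not0_implies_Suc)
  ultimately have "prob {\<omega>\<in>space M. X \<omega> \<noteq> 0} = 1" by simp
  then show ?thesis by (subst (asm) prob_Collect_eq_1) auto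
qed

lemma (in prob_space) lab_expect:
  fixes X :: "'a \<Rightarrow> nat" and f g :: "nat \<Rightarrow> real"
  assumes X[measurable]: "X \<in> measurable M (count_space UNIV)"
    and fs: "(\<lambda>i. f (Suc i)) sums 1" and fnn: "\<forall>i\<ge>1. f i \<ge> 0"
    and dist: "\<forall>i\<ge>1. prob {\<omega>\<in>space M. X \<omega> = i} = f i"
    and gb: "\<forall>i\<ge>1. \<bar>g i\<bar> \<le> B"
  shows "expectation (\<lambda>\<omega>. g (X \<omega>)) = (\<Sum>i. g (Suc i) * f (Suc i))"
proof -
  define h where "h i \<omega> = g (Suc i) * indicator {\<omega>\<in>space M. X \<omega> = Suc i} \<omega>" for i \<omega>
  have int: "integrable M (h i)" for i
    unfolding h_def by (intro integrable_mult_right integrable_real_indicator) (auto simp: emeasure_eq_measure)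
  have ih: "integral\<^sup>L M (h i) = g (Suc i) * f (Suc i)" for i
    unfolding h_def using dist by simp
  have ihn: "(\<integral>\<omega>. norm (h i \<omega>) \<partial>M) = \<bar>g (Suc i)\<bar> * f (Suc i)" for i
  proof -
    have "(\<lambda>\<omega>. norm (h i \<omega>)) = (\<lambda>\<omega>. \<bar>g (Suc i)\<bar> * indicator {\<omega>\<in>space M. X \<omega> = Suc i} \<omega>)"
      unfolding h_def by (auto simp: indicator_def abs_mult)
    then show ?thesis using dist by simp
  qed
  have ptw: "(\<lambda>i. h i \<omega>) sums g (X \<omega>)" "(\<lambda>i. norm (h i \<omega>)) sums \<bar>g (X \<omega>)\<bar>"
    if "\<omega> \<in> space M" "X \<omega> \<noteq> 0" for \<omega>
  proof -
    obtain k where k: "X \<omega> = Suc k" using \<open>X \<omega> \<noteq> 0\<close> not0_implies_Suc by blast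
    have "(\<lambda>i. h i \<omega>) = (\<lambda>i. if i = k then g (Suc k) else 0)"
      using that k unfolding h_def by (auto simp: indicator_def)
    then show "(\<lambda>i. h i \<omega>) sums g (X \<omega>)" using sums_single[of k "\<lambda>_. g (Suc k)"] k by simp
    have "(\<lambda>i. norm (h i \<omega>)) = (\<lambda>i. if i = k then \<bar>g (Suc k)\<bar> else 0)"
      using that k unfolding h_def by (auto simp: indicator_def)
    then show "(\<lambda>i. norm (h i \<omega>)) sums \<bar>g (X \<omega>)\<bar>" using sums_single[of k "\<lambda>_. \<bar>g (Suc k)\<bar>"] k by simp
  qed
  have nz: "AE \<omega> in M. X \<omega> \<noteq> 0" by (rule lab_AE_nz[OF X fs dist])
  have sm: "AE \<omega> in M. summable (\<lambda>i. norm (h i \<omega>))"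
    using AE_space nz by eventually_elim (use ptw in \<open>auto simp: sums_iff\<close>)
  have sB: "summable (\<lambda>i. \<bar>g (Suc i)\<bar> * f (Suc i))"
  proof (rule summable_comparison_test)
    show "\<exists>N. \<forall>n\<ge>N. norm (\<bar>g (Suc n)\<bar> * f (Suc n)) \<le> B * f (Suc n)"
      using gb fnn by (intro exI[of _ 0]) (auto simp: abs_mult intro!: mult_right_mono)
    show "summable (\<lambda>n. B * f (Suc n))" using fs by (intro summable_mult) (auto simp: sums_iff)
  qed
  have sums2: "summable (\<lambda>i. \<integral>\<omega>. norm (h i \<omega>) \<partial>M)" using sB ihn by simp
  have "expectation (\<lambda>\<omega>. g (X \<omega>)) = expectation (\<lambda>\<omega>. \<Sum>i. h i \<omega>)"
  proof (rule integral_cong_AE)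
    show "AE \<omega> in M. g (X \<omega>) = (\<Sum>i. h i \<omega>)"
      using AE_space nz by eventually_elim (use ptw in \<open>auto simp: sums_iff\<close>)
  qed (use int sm sums2 integrable_suminf in auto)
  also have "\<dots> = (\<Sum>i. integral\<^sup>L M (h i))"
    by (rule integral_suminf[OF int sm sums2])
  finally show ?thesis by (simp add: ih)
qed


lemma Rcnt_0[simp]: "Rcnt C 0 \<omega> = 0" unfolding Rcnt_def by simp

lemma Rcnt_Suc: "Rcnt C (Suc k) \<omega> = Rcnt C k \<omega> + (if C (Suc k) \<omega> then 1 else 0)"
proof -
  have "{j\<in>{1..Suc k}. C j \<omega>} = {j\<in>{1..k}. C j \<omega>} \<union> (if C (Suc k) \<omega> then {Suc k} else {})"
    by (auto simp: le_Suc_eq)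
  then show ?thesis unfolding Rcnt_def by (auto simp: card_insert_if)
qed

lemma Rcnt_le: "Rcnt C k \<omega> \<le> k"
proof -
  have "Rcnt C k \<omega> \<le> card {1..k}" unfolding Rcnt_def by (intro card_mono) auto
  then show ?thesis by simp
qed

lemma Scnt_Suc: "Scnt C (Suc k) \<omega> = Scnt C k \<omega> + (if C (Suc k) \<omega> then 0 else 1)"
  unfolding Scnt_def using Rcnt_Suc[of C k \<omega>] Rcnt_le[of C k \<omega>] by auto

lemma Scnt_0[simp]: "Scnt C 0 \<omega> = 0" unfolding Scnt_def by simp

lemma Rcnt_mono: "k \<le> m \<Longrightarrow> Rcnt C k \<omega> \<le> Rcnt C m \<omega>"
proof (induction m)
  case (Suc m) then show ?case by (cases "k = Suc m") (auto simp: Rcnt_Suc le_Suc_eq)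
qed simp

lemma Scnt_mono: "k \<le> m \<Longrightarrow> Scnt C k \<omega> \<le> Scnt C m \<omega>"
proof (induction m)
  case (Suc m) then show ?case by (cases "k = Suc m") (auto simp: Scnt_Suc le_Suc_eq)
qed simp

lemma RS_sum: "Rcnt C m \<omega> + Scnt C m \<omega> = m"
  unfolding Scnt_def using Rcnt_le[of C m \<omega>] by simp

lemma first_passage:
  fixes f :: "nat \<Rightarrow> nat"
  assumes "f 0 = 0" "\<And>k. f (Suc k) \<le> f k + 1" "f m \<ge> c + 1"
  shows "\<exists>k<m. f k = c \<and> f (Suc k) = c + 1"
  using assms(3)
proof (induction m)
  case 0 then show ?case using assms(1) by simp
next
  case (Suc m)
  show ?case
  proof (cases "f m \<ge> c + 1")
    case True then show ?thesis using Suc.IH by (metis less_Suc_eq)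
  next
    case False
    then have "f m = c" "f (Suc m) = c + 1" using Suc.prems assms(2)[of m] by linarith+
    then show ?thesis by blast
  qed
qed

lemma Gam_mono:
  assumes "\<forall>j\<ge>1. X j \<omega> \<ge> 0" "a \<le> b"
  shows "Gam X a \<omega> \<le> Gam X b \<omega>"
  unfolding Gam_def using assms by (intro sum_mono2) auto

lemma measure_mono_AE':
  assumes "AE x in M. x \<in> A \<longrightarrow> x \<in> B" "B \<in> sets M" "emeasure M B \<noteq> \<infinity>"
  shows "measure M A \<le> measure M B"
proof (cases "A \<in> sets M")
  case True
  have "emeasure M A \<le> emeasure M B" by (rule emeasure_mono_AE[OF assms(1,2)])
  then show ?thesis using assms(3) unfolding measure_def by (intro enn2real_mono) (auto simp: top.not_eq_extremum)
next
  case False then show ?thesis by (simp add: measure_notin_sets)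
qed

lemma exp_bound_aux:
  fixes a b N d c :: real
  assumes "0 \<le> a" "a \<le> b" "a + b \<le> N" "0 < N" "0 \<le> d" "d \<le> b - a" "c \<ge> 0"
  shows "exp (-2 * ((b - a) * c)\<^sup>2 / ((a + b) * g\<^sup>2)) \<le> exp (-2 * d\<^sup>2 * c\<^sup>2 / (N * g\<^sup>2))"
proof (cases "a + b = 0")
  case True
  then have "d = 0" using assms by linarith
  then show ?thesis using True by simp
next
  case False
  then have ab: "a + b > 0" using assms by linarith
  show ?thesis
  proof (cases "g = 0")
    case True then show ?thesis by simp
  next
    case False
    have g2: "g\<^sup>2 > 0" using False by simp
    have "d\<^sup>2 \<le> (b - a)\<^sup>2" using assms by (intro power_mono) auto
    then have 1: "d\<^sup>2 * c\<^sup>2 \<le> ((b - a) * c)\<^sup>2" by (simp add: power_mult_distrib mult_right_mono)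
    have "d\<^sup>2 * c\<^sup>2 / (N * g\<^sup>2) \<le> d\<^sup>2 * c\<^sup>2 / ((a + b) * g\<^sup>2)"
      using assms ab g2 by (intro divide_left_mono mult_right_mono mult_pos_pos) auto
    also have "\<dots> \<le> ((b - a) * c)\<^sup>2 / ((a + b) * g\<^sup>2)"
      using 1 ab g2 by (intro divide_right_mono) auto
    finally show ?thesis by simp
  qed
qed

lemma map_upt_eq: "(map f [0..<n] = xs) = (length xs = n \<and> (\<forall>j<n. f j = xs ! j))"
  by (auto simp: list_eq_iff_nth_eq)

locale lab = prob_space M for M :: "'a measure" +
  fixes F0 :: "'a measure" and r s :: "nat \<Rightarrow> real" and LR LS :: "nat \<Rightarrow> 'a \<Rightarrow> nat"
  assumes r_nonneg: "\<forall>i\<ge>1. r i \<ge> 0" and r_sum: "(\<lambda>i. r (Suc i)) sums 1"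
    and s_nonneg: "\<forall>i\<ge>1. s i \<ge> 0" and s_sum: "(\<lambda>i. s (Suc i)) sums 1"
    and mu_pos: "(\<Sum>i. r (Suc i) * s (Suc i)) > 0"
    and F0: "space F0 = space M"
    and indep: "indep_sets
        (\<lambda>x. case x of Rand \<Rightarrow> sets F0
                 | LabR n \<Rightarrow> {LR n -` A \<inter> space M | A. True}
                 | LabS n \<Rightarrow> {LS n -` A \<inter> space M | A. True})
        ({Rand} \<union> {LabR n | n. n \<ge> 1} \<union> {LabS n | n. n \<ge> 1})"
    and distR: "\<forall>n\<ge>1. \<forall>i\<ge>1. measure M {\<omega>\<in>space M. LR n \<omega> = i} = r i"
    and distS: "\<forall>n\<ge>1. \<forall>i\<ge>1. measure M {\<omega>\<in>space M. LS n \<omega> = i} = s i"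
begin

definition L :: "src \<Rightarrow> 'a \<Rightarrow> nat" where
  "L x = (case x of Rand \<Rightarrow> (\<lambda>_. 0) | LabR n \<Rightarrow> LR n | LabS n \<Rightarrow> LS n)"

definition J :: "src set" where "J = {LabR n | n. n \<ge> 1} \<union> {LabS n | n. n \<ge> 1}"

lemma idx_events: "\<forall>i\<in>({Rand} \<union> {LabR n | n. n \<ge> 1} \<union> {LabS n | n. n \<ge> 1}).
   (case i of Rand \<Rightarrow> sets F0
                 | LabR n \<Rightarrow> {LR n -` A \<inter> space M | A. True}
                 | LabS n \<Rightarrow> {LS n -` A \<inter> space M | A. True}) \<subseteq> events"
  using indep unfolding indep_sets_def by (rule conjunct1)

lemma F0_sets: "sets F0 \<subseteq> sets M"
  using idx_events[rule_format, of Rand] by simp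

lemma LR_sets: "n \<ge> 1 \<Longrightarrow> LR n -` A \<inter> space M \<in> sets M"
  using idx_events[rule_format, of "LabR n"] by auto

lemma LS_sets: "n \<ge> 1 \<Longrightarrow> LS n -` A \<inter> space M \<in> sets M"
  using idx_events[rule_format, of "LabS n"] by auto

lemma LR_meas[measurable]: "n \<ge> 1 \<Longrightarrow> LR n \<in> measurable M (count_space UNIV)"
  by (rule measurableI) (auto intro: LR_sets)

lemma LS_meas[measurable]: "n \<ge> 1 \<Longrightarrow> LS n \<in> measurable M (count_space UNIV)"
  by (rule measurableI) (auto intro: LS_sets)

lemma indepL: "indep_vars (\<lambda>_. count_space UNIV) L J"
  unfolding indep_vars_def2
proof
  show "\<forall>i\<in>J. random_variable (count_space UNIV) (L i)"
    unfolding J_def by (intro ballI; elim UnE CollectE exE conjE; simp add: L_def)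
  have h1: "indep_sets
        (\<lambda>x. case x of Rand \<Rightarrow> sets F0
                 | LabR n \<Rightarrow> {LR n -` A \<inter> space M | A. True}
                 | LabS n \<Rightarrow> {LS n -` A \<inter> space M | A. True}) J"
    by (rule indep_sets_mono_index[OF _ indep]) (auto simp: J_def)
  have h2: "\<And>i. i \<in> J \<Longrightarrow> (case i of Rand \<Rightarrow> sets F0
                 | LabR n \<Rightarrow> {LR n -` A \<inter> space M | A. True}
                 | LabS n \<Rightarrow> {LS n -` A \<inter> space M | A. True}) = {L i -` A \<inter> space M |A. A \<in> sets (count_space UNIV)}"
    unfolding J_def by (elim UnE CollectE exE conjE; simp add: L_def)
  show "indep_sets (\<lambda>i. {L i -` A \<inter> space M |A. A \<in> sets (count_space UNIV)}) J"
    by (rule iffD1[OF indep_sets_cong[OF refl h2] h1])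
qed


definition mu :: real where "mu = (\<Sum>i. r (Suc i) * s (Suc i))"
definition gam :: real where "gam = max (SUP i\<in>{1..}. r i) (SUP i\<in>{1..}. s i)"

lemma r_le1: "i \<ge> 1 \<Longrightarrow> r i \<le> 1"
proof -
  assume "i \<ge> 1" then obtain k where k: "i = Suc k" using not0_implies_Suc by fastforce
  have "sum (\<lambda>i. r (Suc i)) {k} \<le> (\<Sum>i. r (Suc i))"
    using r_sum r_nonneg by (intro sum_le_suminf) (auto simp: sums_iff)
  then show ?thesis using k r_sum by (simp add: sums_iff)
qed

lemma s_le1: "i \<ge> 1 \<Longrightarrow> s i \<le> 1"
proof -
  assume "i \<ge> 1" then obtain k where k: "i = Suc k" using not0_implies_Suc by fastforce
  have "sum (\<lambda>i. s (Suc i)) {k} \<le> (\<Sum>i. s (Suc i))"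
    using s_sum s_nonneg by (intro sum_le_suminf) (auto simp: sums_iff)
  then show ?thesis using k s_sum by (simp add: sums_iff)
qed

lemma r_le_gam: "i \<ge> 1 \<Longrightarrow> r i \<le> gam"
proof -
  assume i: "i \<ge> 1"
  have "bdd_above (r ` {1..})" using r_le1 by (intro bdd_aboveI[of _ 1]) auto
  then have "r i \<le> (SUP i\<in>{1..}. r i)" using i by (intro cSUP_upper) auto
  then show ?thesis unfolding gam_def by linarith
qed

lemma s_le_gam: "i \<ge> 1 \<Longrightarrow> s i \<le> gam"
proof -
  assume i: "i \<ge> 1"
  have "bdd_above (s ` {1..})" using s_le1 by (intro bdd_aboveI[of _ 1]) auto
  then have "s i \<le> (SUP i\<in>{1..}. s i)" using i by (intro cSUP_upper) auto
  then show ?thesis unfolding gam_def by linarith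
qed

lemma summable_rs: "summable (\<lambda>i. r (Suc i) * s (Suc i))"
proof (rule summable_comparison_test)
  show "\<exists>N. \<forall>n\<ge>N. norm (r (Suc n) * s (Suc n)) \<le> s (Suc n)"
    using r_nonneg s_nonneg r_le1
    by (intro exI[of _ 0]) (auto simp: abs_mult intro!: mult_left_le_one_le)
  show "summable (\<lambda>n. s (Suc n))" using s_sum by (auto simp: sums_iff)
qed

lemma mu_pos': "mu > 0" using mu_pos unfolding mu_def .

lemma mu_le_gam: "mu \<le> gam"
proof -
  have "mu \<le> (\<Sum>i. gam * s (Suc i))"
    unfolding mu_def
  proof (rule suminf_le)
    show "\<And>n. r (Suc n) * s (Suc n) \<le> gam * s (Suc n)"
      using r_le_gam s_nonneg by (intro mult_right_mono) auto
    show "summable (\<lambda>i. gam * s (Suc i))" using s_sum by (intro summable_mult) (auto simp: sums_iff)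
  qed (rule summable_rs)
  also have "\<dots> = gam" using s_sum by (simp add: suminf_mult sums_iff)
  finally show ?thesis .
qed

lemma gam_pos: "gam > 0" using mu_pos' mu_le_gam by linarith

lemma AE_good: "AE \<omega> in M. \<forall>j\<ge>1. LR j \<omega> \<noteq> 0 \<and> LS j \<omega> \<noteq> 0"
proof -
  have "\<forall>j::nat. AE \<omega> in M. (j \<ge> 1 \<longrightarrow> LR j \<omega> \<noteq> 0 \<and> LS j \<omega> \<noteq> 0)"
  proof
    fix j :: nat
    show "AE \<omega> in M. (j \<ge> 1 \<longrightarrow> LR j \<omega> \<noteq> 0 \<and> LS j \<omega> \<noteq> 0)"
    proof (cases "j \<ge> 1")
      case True
      have "AE \<omega> in M. LR j \<omega> \<noteq> 0"
        using True distR by (intro lab_AE_nz[OF LR_meas[OF True] r_sum]) auto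
      moreover have "AE \<omega> in M. LS j \<omega> \<noteq> 0"
        using True distS by (intro lab_AE_nz[OF LS_meas[OF True] s_sum]) auto
      ultimately show ?thesis by eventually_elim auto
    qed auto
  qed
  then show ?thesis by (subst AE_all_countable) auto
qed

lemma expect_S: "n \<ge> 1 \<Longrightarrow> expectation (\<lambda>\<omega>. r (LS n \<omega>)) = mu"
  unfolding mu_def
  by (rule lab_expect[OF LS_meas s_sum s_nonneg, of n r 1]) (use distS r_le1 r_nonneg in auto)

lemma expect_R: "n \<ge> 1 \<Longrightarrow> expectation (\<lambda>\<omega>. s (LR n \<omega>)) = mu"
proof -
  assume n: "n \<ge> 1"
  have "expectation (\<lambda>\<omega>. s (LR n \<omega>)) = (\<Sum>i. s (Suc i) * r (Suc i))"
    by (rule lab_expect[OF LR_meas r_sum r_nonneg, of n s 1]) (use n distR s_le1 s_nonneg in auto)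
  then show ?thesis unfolding mu_def by (simp add: mult.commute)
qed


lemma hoeff_gen:
  fixes P Q :: "nat \<Rightarrow> src" and fp fq :: "nat \<Rightarrow> real" and a b :: nat
  assumes injP: "inj P" and injQ: "inj Q" and PQ: "\<forall>j k. P j \<noteq> Q k"
    and PJ: "\<forall>j\<ge>1. P j \<in> J" and QJ: "\<forall>j\<ge>1. Q j \<in> J"
    and bp: "\<forall>j\<ge>1. AE \<omega> in M. fp (L (P j) \<omega>) \<in> {0..gam}"
    and bq: "\<forall>j\<ge>1. AE \<omega> in M. fq (L (Q j) \<omega>) \<in> {0..gam}"
    and ep: "\<forall>j\<ge>1. expectation (\<lambda>\<omega>. fp (L (P j) \<omega>)) = mu"
    and eq: "\<forall>j\<ge>1. expectation (\<lambda>\<omega>. fq (L (Q j) \<omega>)) = mu"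
    and ab: "a \<le> b"
  shows "prob {\<omega>\<in>space M. (\<Sum>j=1..b. fq (L (Q j) \<omega>)) \<le> (\<Sum>j=1..a. fp (L (P j) \<omega>))}
           \<le> exp (-2 * ((real b - real a) * mu)\<^sup>2 / ((real a + real b) * gam\<^sup>2))"
proof (cases "a + b = 0")
  case True
  then show ?thesis by simp
next
  case False
  define IP where "IP = P ` {1..a}"
  define IQ where "IQ = Q ` {1..b}"
  define I where "I = IP \<union> IQ"
  define Y where "Y i k = (if i \<in> range P then fp k else - fq k)" for i k
  define Z where "Z i \<omega> = Y i (L i \<omega>)" for i \<omega>
  define lo where "lo i = (if i \<in> range P then 0 else - gam)" for i
  define hi where "hi i = (if i \<in> range P then gam else 0)" for i
  have nQ: "\<And>j. Q j \<notin> range P" using PQ by (metis rangeE)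
  have disj: "IP \<inter> IQ = {}" unfolding IP_def IQ_def using PQ by auto
  have IJ: "I \<subseteq> J" unfolding I_def IP_def IQ_def using PJ QJ by auto
  have finI: "finite I" unfolding I_def IP_def IQ_def by auto
  have cardI: "card I = a + b"
    unfolding I_def using disj
    by (simp add: card_Un_disjoint IP_def IQ_def card_image inj_on_subset[OF injP] inj_on_subset[OF injQ])
  have indepZ: "indep_vars (\<lambda>_. borel) Z I"
    unfolding Z_def
    by (rule indep_vars_compose2[OF indep_vars_subset[OF indepL IJ]]) auto
  have AEZ: "AE x in M. Z i x \<in> {lo i..hi i}" if "i \<in> I" for i
  proof -
    from that consider (p) j where "j \<ge> 1" "i = P j" | (q) j where "j \<ge> 1" "i = Q j" "i \<notin> range P"
      unfolding I_def IP_def IQ_def using PQ by (auto; metis rangeE)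
    then show ?thesis
    proof cases
      case p
      then show ?thesis using bp unfolding Z_def Y_def lo_def hi_def by auto
    next
      case q
      then show ?thesis using bq[rule_format, of j] unfolding Z_def Y_def lo_def hi_def
        by (auto elim!: eventually_mono)
    qed
  qed
  interpret H: Hoeffding_ineq M I Z lo hi "\<Sum>i\<in>I. expectation (Z i)"
    by unfold_locales (use finI indepZ AEZ in auto)
  have sumd: "(\<Sum>i\<in>I. (hi i - lo i)\<^sup>2) = (real a + real b) * gam\<^sup>2"
  proof -
    have "(\<Sum>i\<in>I. (hi i - lo i)\<^sup>2) = (\<Sum>i\<in>I. gam\<^sup>2)"
      by (intro sum.cong) (auto simp: hi_def lo_def)
    then show ?thesis using cardI by simp
  qed
  have sumZ: "(\<Sum>i\<in>I. Z i \<omega>) = (\<Sum>j=1..a. fp (L (P j) \<omega>)) - (\<Sum>j=1..b. fq (L (Q j) \<omega>))" for \<omega>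
  proof -
    have "(\<Sum>i\<in>I. Z i \<omega>) = (\<Sum>i\<in>IP. Z i \<omega>) + (\<Sum>i\<in>IQ. Z i \<omega>)"
      unfolding I_def using disj by (intro sum.union_disjoint) (auto simp: IP_def IQ_def)
    also have "(\<Sum>i\<in>IP. Z i \<omega>) = (\<Sum>j=1..a. fp (L (P j) \<omega>))"
      unfolding IP_def by (subst sum.reindex) (auto simp: Z_def Y_def inj_on_subset[OF injP])
    also have "(\<Sum>i\<in>IQ. Z i \<omega>) = - (\<Sum>j=1..b. fq (L (Q j) \<omega>))"
      unfolding IQ_def using PQ
      by (subst sum.reindex) (auto simp: Z_def Y_def nQ inj_on_subset[OF injQ] sum_negf[symmetric] intro!: sum.cong)
    finally show ?thesis by simp
  qed
  have sumE: "(\<Sum>i\<in>I. expectation (Z i)) = real a * mu - real b * mu"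
  proof -
    have "(\<Sum>i\<in>I. expectation (Z i)) = (\<Sum>i\<in>IP. expectation (Z i)) + (\<Sum>i\<in>IQ. expectation (Z i))"
      unfolding I_def using disj by (intro sum.union_disjoint) (auto simp: IP_def IQ_def)
    also have "(\<Sum>i\<in>IP. expectation (Z i)) = (\<Sum>j=1..a. expectation (Z (P j)))"
      unfolding IP_def by (subst sum.reindex) (auto simp: inj_on_subset[OF injP])
    also have "\<dots> = (\<Sum>j=1..a. mu)"
      using ep by (intro sum.cong) (auto simp: Z_def[abs_def] Y_def)
    also have "(\<Sum>i\<in>IQ. expectation (Z i)) = (\<Sum>j=1..b. expectation (Z (Q j)))"
      unfolding IQ_def by (subst sum.reindex) (auto simp: inj_on_subset[OF injQ])
    also have "\<dots> = (\<Sum>j=1..b. - mu)"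
      using eq by (intro sum.cong) (auto simp: Z_def[abs_def] Y_def nQ)
    finally show ?thesis by simp
  qed
  have eps: "(real b - real a) * mu \<ge> 0" using ab mu_pos' by simp
  have pos: "(\<Sum>i\<in>I. (hi i - lo i)\<^sup>2) > 0"
    unfolding sumd using False gam_pos by (intro mult_pos_pos) auto
  have "{\<omega>\<in>space M. (\<Sum>j=1..b. fq (L (Q j) \<omega>)) \<le> (\<Sum>j=1..a. fp (L (P j) \<omega>))}
      = {\<omega>\<in>space M. (\<Sum>i\<in>I. Z i \<omega>) \<ge> (\<Sum>i\<in>I. expectation (Z i)) + (real b - real a) * mu}"
    by (simp add: sumZ sumE algebra_simps)
  also have "prob \<dots> \<le> exp (-2 * ((real b - real a) * mu)\<^sup>2 / (\<Sum>i\<in>I. (hi i - lo i)\<^sup>2))"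
    by (rule H.Hoeffding_ineq_ge[OF eps pos])
  finally show ?thesis by (simp add: sumd)
qed


abbreviation "XS \<equiv> (\<lambda>j w. r (LS j w))"
abbreviation "XR \<equiv> (\<lambda>j w. s (LR j w))"

lemma GamS_meas[measurable]: "(\<lambda>\<omega>. Gam XS m \<omega>) \<in> borel_measurable M"
  unfolding Gam_def
  by (intro borel_measurable_sum measurable_compose[OF LS_meas]) auto

lemma GamR_meas[measurable]: "(\<lambda>\<omega>. Gam XR m \<omega>) \<in> borel_measurable M"
  unfolding Gam_def
  by (intro borel_measurable_sum measurable_compose[OF LR_meas]) auto

lemma good_XS: "\<forall>j\<ge>1. LR j \<omega> \<noteq> 0 \<and> LS j \<omega> \<noteq> 0 \<Longrightarrow> \<forall>j\<ge>1. XS j \<omega> \<ge> 0"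
  using r_nonneg by auto

lemma good_XR: "\<forall>j\<ge>1. LR j \<omega> \<noteq> 0 \<and> LS j \<omega> \<noteq> 0 \<Longrightarrow> \<forall>j\<ge>1. XR j \<omega> \<ge> 0"
  using s_nonneg by auto

lemma AE_bS: "\<forall>j\<ge>1. AE \<omega> in M. r (L (LabS j) \<omega>) \<in> {0..gam}"
proof (intro allI impI)
  fix j :: nat assume j: "j \<ge> 1"
  show "AE \<omega> in M. r (L (LabS j) \<omega>) \<in> {0..gam}"
    using AE_good
  proof eventually_elim
    case (elim \<omega>)
    then have "LS j \<omega> \<ge> 1" using j by (simp add: Suc_le_eq)
    then show ?case using r_nonneg r_le_gam by (auto simp: L_def)
  qed
qed

lemma AE_bR: "\<forall>j\<ge>1. AE \<omega> in M. s (L (LabR j) \<omega>) \<in> {0..gam}"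
proof (intro allI impI)
  fix j :: nat assume j: "j \<ge> 1"
  show "AE \<omega> in M. s (L (LabR j) \<omega>) \<in> {0..gam}"
    using AE_good
  proof eventually_elim
    case (elim \<omega>)
    then have "LR j \<omega> \<ge> 1" using j by (simp add: Suc_le_eq)
    then show ?case using s_nonneg s_le_gam by (auto simp: L_def)
  qed
qed

lemma hoefS:
  assumes "a \<le> b"
  shows "prob {\<omega>\<in>space M. Gam XR b \<omega> \<le> Gam XS a \<omega>}
           \<le> exp (-2 * ((real b - real a) * mu)\<^sup>2 / ((real a + real b) * gam\<^sup>2))"
proof -
  have "prob {\<omega>\<in>space M. (\<Sum>j=1..b. s (L (LabR j) \<omega>)) \<le> (\<Sum>j=1..a. r (L (LabS j) \<omega>))}
           \<le> exp (-2 * ((real b - real a) * mu)\<^sup>2 / ((real a + real b) * gam\<^sup>2))"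
    by (rule hoeff_gen[OF _ _ _ _ _ AE_bS AE_bR _ _ assms])
       (auto simp: inj_def J_def L_def expect_S expect_R)
  then show ?thesis by (simp add: Gam_def L_def)
qed

lemma hoefR:
  assumes "a \<le> b"
  shows "prob {\<omega>\<in>space M. Gam XS b \<omega> \<le> Gam XR a \<omega>}
           \<le> exp (-2 * ((real b - real a) * mu)\<^sup>2 / ((real a + real b) * gam\<^sup>2))"
proof -
  have "prob {\<omega>\<in>space M. (\<Sum>j=1..b. r (L (LabS j) \<omega>)) \<le> (\<Sum>j=1..a. s (L (LabR j) \<omega>))}
           \<le> exp (-2 * ((real b - real a) * mu)\<^sup>2 / ((real a + real b) * gam\<^sup>2))"
    by (rule hoeff_gen[OF _ _ _ _ _ AE_bR AE_bS _ _ assms])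
       (auto simp: inj_def J_def L_def expect_S expect_R)
  then show ?thesis by (simp add: Gam_def L_def)
qed

lemma hoef_both:
  assumes "a \<le> b" "a + b \<le> N" "0 < N" "0 \<le> d" "d \<le> real b - real a"
  shows "prob {\<omega>\<in>space M. Gam XR b \<omega> \<le> Gam XS a \<omega>} \<le> exp (-2 * d\<^sup>2 * mu\<^sup>2 / (real N * gam\<^sup>2))"
    and "prob {\<omega>\<in>space M. Gam XS b \<omega> \<le> Gam XR a \<omega>} \<le> exp (-2 * d\<^sup>2 * mu\<^sup>2 / (real N * gam\<^sup>2))"
proof -
  have e: "exp (-2 * ((real b - real a) * mu)\<^sup>2 / ((real a + real b) * gam\<^sup>2)) \<le> exp (-2 * d\<^sup>2 * mu\<^sup>2 / (real N * gam\<^sup>2))"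
    using assms mu_pos' by (intro exp_bound_aux) auto
  show "prob {\<omega>\<in>space M. Gam XR b \<omega> \<le> Gam XS a \<omega>} \<le> exp (-2 * d\<^sup>2 * mu\<^sup>2 / (real N * gam\<^sup>2))"
    using hoefS[OF assms(1)] e by linarith
  show "prob {\<omega>\<in>space M. Gam XS b \<omega> \<le> Gam XR a \<omega>} \<le> exp (-2 * d\<^sup>2 * mu\<^sup>2 / (real N * gam\<^sup>2))"
    using hoefR[OF assms(1)] e by linarith
qed

end

locale lab_pol = lab +
  fixes C :: "nat \<Rightarrow> 'a \<Rightarrow> bool"
  assumes policy: "reading_policy M F0 C LR LS"
    and greedy: "greedy M r s C LR LS"
begin


lemma LR_meas_Suc[measurable]: "LR (Suc j) \<in> measurable M (count_space UNIV)"
  by (rule LR_meas) simp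

lemma LS_meas_Suc[measurable]: "LS (Suc j) \<in> measurable M (count_space UNIV)"
  by (rule LS_meas) simp

lemma Rcnt_meas:
  assumes "\<forall>j\<in>{1..n}. {\<omega>\<in>space M. C j \<omega>} \<in> sets M"
  shows "Rcnt C n \<in> measurable M (count_space UNIV)"
  using assms
proof (induction n)
  case 0
  then show ?case by (simp add: Rcnt_def)
next
  case (Suc n)
  have [measurable]: "Rcnt C n \<in> measurable M (count_space UNIV)" using Suc by auto
  have [measurable]: "C (Suc n) \<in> measurable M (count_space UNIV)" by (rule Measurable.pred_def[THEN iffD2]) (use Suc.prems in auto)
  have e: "Rcnt C (Suc n) = (\<lambda>\<omega>. Rcnt C n \<omega> + (if C (Suc n) \<omega> then 1 else 0))"
    by (auto simp: Rcnt_Suc)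
  show ?case unfolding e by measurable
qed

lemma hist_meas:
  assumes Cm: "\<forall>j\<in>{1..n}. {\<omega>\<in>space M. C j \<omega>} \<in> sets M"
  shows "hist C LR LS n -` A \<inter> space M \<in> sets M"
proof -
  have [measurable]: "Rcnt C n \<in> measurable M (count_space UNIV)" by (rule Rcnt_meas[OF Cm])
  define enc where "enc \<omega> = (Rcnt C n \<omega>, map (\<lambda>j. LR (Suc j) \<omega>) [0..<n], map (\<lambda>j. LS (Suc j) \<omega>) [0..<n])" for \<omega>
  define dec :: "nat \<times> nat list \<times> nat list \<Rightarrow> nat \<times> (nat \<Rightarrow> nat) \<times> (nat \<Rightarrow> nat)" where
    "dec = (\<lambda>(k, xs, ys). (k, \<lambda>j. if 1 \<le> j \<and> j \<le> k then xs ! (j - 1) else 0,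
                              \<lambda>j. if 1 \<le> j \<and> j \<le> n - k then ys ! (j - 1) else 0))"
  have hd: "hist C LR LS n \<omega> = dec (enc \<omega>)" for \<omega>
  proof -
    have Rn: "Rcnt C n \<omega> \<le> n" by (rule Rcnt_le)
    have e1: "map (\<lambda>j. LR (Suc j) \<omega>) [0..<n] ! (j - 1) = LR j \<omega>" if "1 \<le> j" "j \<le> n" for j
      using that by (cases j) (auto simp: nth_upt)
    have e2: "map (\<lambda>j. LS (Suc j) \<omega>) [0..<n] ! (j - 1) = LS j \<omega>" if "1 \<le> j" "j \<le> n" for j
      using that by (cases j) (auto simp: nth_upt)
    have f1: "(\<lambda>j. if 1 \<le> j \<and> j \<le> Rcnt C n \<omega> then LR j \<omega> else 0) =
              (\<lambda>j. if 1 \<le> j \<and> j \<le> Rcnt C n \<omega> then map (\<lambda>j. LR (Suc j) \<omega>) [0..<n] ! (j - 1) else 0)"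
      using Rn by (intro ext) (auto simp: e1)
    have f2: "(\<lambda>j. if 1 \<le> j \<and> j \<le> n - Rcnt C n \<omega> then LS j \<omega> else 0) =
              (\<lambda>j. if 1 \<le> j \<and> j \<le> n - Rcnt C n \<omega> then map (\<lambda>j. LS (Suc j) \<omega>) [0..<n] ! (j - 1) else 0)"
      by (intro ext) (auto simp: e2)
    show ?thesis
      unfolding hist_def dec_def enc_def Scnt_def prod.case f1 f2 by (rule refl)
  qed
  have "enc \<in> measurable M (count_space UNIV)"
  proof (subst measurable_count_space_eq2_countable, safe)
    fix k :: nat and xs ys :: "nat list"
    have "enc -` {(k, xs, ys)} \<inter> space M =
      {\<omega>\<in>space M. Rcnt C n \<omega> = k \<and> length xs = n \<and> (\<forall>j<n. LR (Suc j) \<omega> = xs ! j)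
                   \<and> length ys = n \<and> (\<forall>j<n. LS (Suc j) \<omega> = ys ! j)}"
      unfolding enc_def vimage_def singleton_iff prod.inject map_upt_eq by blast
    also have "\<dots> \<in> sets M" by measurable
    finally show "enc -` {(k, xs, ys)} \<inter> space M \<in> sets M" .
  qed auto
  then have "enc -` (dec -` A) \<inter> space M \<in> sets M" by (rule measurable_sets) auto
  moreover have "hist C LR LS n -` A \<inter> space M = enc -` (dec -` A) \<inter> space M"
    using hd by auto
  ultimately show ?thesis by simp
qed

lemma C_meas_all: "\<forall>j\<in>{1..n}. {\<omega>\<in>space M. C j \<omega>} \<in> sets M"
proof (induction n)
  case 0 then show ?case by simp
next
  case (Suc n)
  have "filt M F0 C LR LS n \<subseteq> sets M"
    unfolding filt_def
    using F0_sets hist_meas[OF Suc.IH] by (intro sets.sigma_sets_subset) auto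
  moreover have "{\<omega>\<in>space M. C (Suc n) \<omega>} \<in> filt M F0 C LR LS n"
    using policy unfolding reading_policy_def by (metis diff_Suc_1 le_add1 plus_1_eq_Suc)
  ultimately show ?case using Suc.IH by (auto simp: le_Suc_eq)
qed

lemma C_pred[measurable]: "C (Suc j) \<in> measurable M (count_space UNIV)"
  by (rule Measurable.pred_def[THEN iffD2]) (use C_meas_all[of "Suc j"] in auto)

lemma Rcnt_meas'[measurable]: "Rcnt C n \<in> measurable M (count_space UNIV)"
  by (rule Rcnt_meas) (use C_meas_all in auto)

lemma Scnt_meas'[measurable]: "Scnt C n \<in> measurable M (count_space UNIV)"
  unfolding Scnt_def[abs_def] by measurable

lemma Tn_meas[measurable]: "Tn C n \<in> measurable M (count_space UNIV)"
  unfolding Tn_def[abs_def] Let_def by measurable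

lemma lemR:
  assumes \<omega>: "\<omega> \<in> space M" and good: "\<forall>j\<ge>1. LR j \<omega> \<noteq> 0 \<and> LS j \<omega> \<noteq> 0"
    and c: "c \<ge> 1" and R: "Rcnt C m \<omega> \<ge> c + 1"
  shows "Gam XR c \<omega> \<le> Gam XS (Scnt C m \<omega>) \<omega>"
proof -
  have "\<exists>k<m. Rcnt C k \<omega> = c \<and> Rcnt C (Suc k) \<omega> = c + 1"
    by (rule first_passage[where f="\<lambda>k. Rcnt C k \<omega>" and m=m and c=c]) (use R in \<open>auto simp: Rcnt_Suc\<close>)
  then obtain k where k: "k < m" "Rcnt C k \<omega> = c" "Rcnt C (Suc k) \<omega> = c + 1" by blast
  have k1: "k \<ge> 1" using k c by (cases k) auto
  have Ck: "C (Suc k) \<omega>" using k by (auto simp: Rcnt_Suc split: if_splits)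
  have "\<not> (Gam XS (Scnt C k \<omega>) \<omega> < Gam XR (Rcnt C k \<omega>) \<omega>)"
    using greedy k1 \<omega> Ck unfolding greedy_def by blast
  then have "Gam XR c \<omega> \<le> Gam XS (Scnt C k \<omega>) \<omega>" using k by simp
  also have "\<dots> \<le> Gam XS (Scnt C m \<omega>) \<omega>"
    using good_XS[OF good] Scnt_mono[of k m C \<omega>] k by (intro Gam_mono) auto
  finally show ?thesis .
qed

lemma lemS:
  assumes \<omega>: "\<omega> \<in> space M" and good: "\<forall>j\<ge>1. LR j \<omega> \<noteq> 0 \<and> LS j \<omega> \<noteq> 0"
    and c: "c \<ge> 1" and S: "Scnt C m \<omega> \<ge> c + 1"
  shows "Gam XS c \<omega> \<le> Gam XR (Rcnt C m \<omega>) \<omega>"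
proof -
  have "\<exists>k<m. Scnt C k \<omega> = c \<and> Scnt C (Suc k) \<omega> = c + 1"
    by (rule first_passage[where f="\<lambda>k. Scnt C k \<omega>" and m=m and c=c]) (use S in \<open>auto simp: Scnt_Suc\<close>)
  then obtain k where k: "k < m" "Scnt C k \<omega> = c" "Scnt C (Suc k) \<omega> = c + 1" by blast
  have k1: "k \<ge> 1" using k c by (cases k) auto
  have Ck: "\<not> C (Suc k) \<omega>" using k by (auto simp: Scnt_Suc split: if_splits)
  have "\<not> (Gam XS (Scnt C k \<omega>) \<omega> > Gam XR (Rcnt C k \<omega>) \<omega>)"
    using greedy k1 \<omega> Ck unfolding greedy_def by blast
  then have "Gam XS c \<omega> \<le> Gam XR (Rcnt C k \<omega>) \<omega>" using k by simp
  also have "\<dots> \<le> Gam XR (Rcnt C m \<omega>) \<omega>"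
    using good_XR[OF good] Rcnt_mono[of k m C \<omega>] k by (intro Gam_mono) auto
  finally show ?thesis .
qed

lemma part1:
  assumes t: "t \<ge> 1"
  shows "measure M {\<omega>\<in>space M. \<bar>(real (Rcnt C n \<omega>) - real n / 2) / sqrt (real n)\<bar> > t}
           \<le> 2 * exp (- ((mu / (2 * gam))\<^sup>2 * t))"
    (is "measure M ?B \<le> _")
proof (cases "n = 0")
  case True
  then have e: "?B = {}" using t by auto
  show ?thesis by (subst e) simp
next
  case False
  then have n1: "real n \<ge> 1" by simp
  have sq: "sqrt (real n) \<ge> 1" using n1 by simp
  have tsq: "t * sqrt (real n) \<ge> 1" using mult_mono[OF t sq] t by simp
  define x where "x = real n / 2 + t * sqrt (real n)"
  define m1 where "m1 = nat \<lfloor>x\<rfloor>"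
  have x1: "x \<ge> 1" unfolding x_def using tsq n1 by linarith
  have m1r: "real m1 \<le> x" "real m1 > x - 1" unfolding m1_def using x1 by linarith+
  have m1_1: "m1 \<ge> 1" unfolding m1_def using x1 by linarith
  have key: "Rcnt C n \<omega> \<ge> m1 + 1 \<or> Scnt C n \<omega> \<ge> m1 + 1" if "\<omega> \<in> ?B" for \<omega>
  proof -
    have sp: "sqrt (real n) > 0" using sq by linarith
    from that have "(real (Rcnt C n \<omega>) - real n / 2) / sqrt (real n) > t \<or>
                    (real (Rcnt C n \<omega>) - real n / 2) / sqrt (real n) < - t" by auto
    then have "real (Rcnt C n \<omega>) - real n / 2 > t * sqrt (real n) \<or>
               real (Rcnt C n \<omega>) - real n / 2 < - t * sqrt (real n)"
      using sp by (auto simp: field_simps)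
    moreover have "real (Scnt C n \<omega>) = real n - real (Rcnt C n \<omega>)"
      using RS_sum[of C n \<omega>] by (metis add_diff_cancel_left' of_nat_add)
    ultimately have "real (Rcnt C n \<omega>) > x \<or> real (Scnt C n \<omega>) > x" unfolding x_def by auto
    then show ?thesis using m1r by auto
  qed
  show ?thesis
  proof (cases "m1 + 1 > n")
    case True
    have e: "?B = {}"
    proof (intro equalityI subsetI)
      fix \<omega> assume "\<omega> \<in> ?B"
      then show "\<omega> \<in> {}" using key Rcnt_le[of C n \<omega>] RS_sum[of C n \<omega>] True by fastforce
    qed auto
    show ?thesis by (subst e) simp
  next
    case False
    define m0 where "m0 = n - m1 - 1"
    have m01: "m0 + m1 + 1 = n" unfolding m0_def using False by simp
    define B1 where "B1 = {\<omega>\<in>space M. Gam XR m1 \<omega> \<le> Gam XS m0 \<omega>}"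
    define B2 where "B2 = {\<omega>\<in>space M. Gam XS m1 \<omega> \<le> Gam XR m0 \<omega>}"
    have B1m: "B1 \<in> sets M" unfolding B1_def by measurable
    have B2m: "B2 \<in> sets M" unfolding B2_def by measurable
    have "AE \<omega> in M. \<omega> \<in> ?B \<longrightarrow> \<omega> \<in> B1 \<union> B2"
      using AE_space AE_good
    proof eventually_elim
      case (elim \<omega>)
      show ?case
      proof
        assume B: "\<omega> \<in> ?B"
        from key[OF B] show "\<omega> \<in> B1 \<union> B2"
        proof
          assume R: "Rcnt C n \<omega> \<ge> m1 + 1"
          have "Gam XR m1 \<omega> \<le> Gam XS (Scnt C n \<omega>) \<omega>"
            by (rule lemR[OF elim(1) elim(2) m1_1 R])
          also have "\<dots> \<le> Gam XS m0 \<omega>"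
            using good_XS[OF elim(2)] R RS_sum[of C n \<omega>] m01 by (intro Gam_mono) auto
          finally show ?thesis unfolding B1_def using elim by auto
        next
          assume S: "Scnt C n \<omega> \<ge> m1 + 1"
          have "Gam XS m1 \<omega> \<le> Gam XR (Rcnt C n \<omega>) \<omega>"
            by (rule lemS[OF elim(1) elim(2) m1_1 S])
          also have "\<dots> \<le> Gam XR m0 \<omega>"
            using good_XR[OF elim(2)] S RS_sum[of C n \<omega>] m01 by (intro Gam_mono) auto
          finally show ?thesis unfolding B2_def using elim by auto
        qed
      qed
    qed
    then have "measure M ?B \<le> measure M (B1 \<union> B2)"
      using B1m B2m by (intro measure_mono_AE') auto
    also have "\<dots> \<le> measure M B1 + measure M B2" using B1m B2m by (rule measure_Un_le)
    finally have mB: "measure M ?B \<le> measure M B1 + measure M B2" .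
    define d where "d = 2 * t * sqrt (real n) - 1"
    have m0m1: "m0 \<le> m1" using m01 m1r unfolding x_def using tsq by linarith
    have d0: "0 \<le> d" unfolding d_def using tsq by linarith
    have m0r: "real m0 = real n - 1 - real m1"
      using arg_cong[OF m01, of real] by simp
    have dle: "d \<le> real m1 - real m0" using m0r m1r unfolding d_def x_def by linarith
    have hb: "measure M B1 \<le> exp (-2 * d\<^sup>2 * mu\<^sup>2 / (real n * gam\<^sup>2))"
             "measure M B2 \<le> exp (-2 * d\<^sup>2 * mu\<^sup>2 / (real n * gam\<^sup>2))"
      unfolding B1_def B2_def using m0m1 m01 False d0 dle by (intro hoef_both; simp)+
    have dd: "d\<^sup>2 \<ge> t * real n"
    proof -
      have "d \<ge> t * sqrt (real n)" unfolding d_def using tsq by linarith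
      then have "d\<^sup>2 \<ge> (t * sqrt (real n))\<^sup>2" using tsq by (intro power_mono) auto
      also have "(t * sqrt (real n))\<^sup>2 = t\<^sup>2 * real n" by (simp add: power_mult_distrib)
      also have "t\<^sup>2 * real n \<ge> t * real n" using t n1 by (simp add: power2_eq_square)
      finally show ?thesis by linarith
    qed
    have q: "mu\<^sup>2 / gam\<^sup>2 > 0" using mu_pos' gam_pos by simp
    have "(mu / (2 * gam))\<^sup>2 * t = (t / 4) * (mu\<^sup>2 / gam\<^sup>2)" by (simp add: power_divide power_mult_distrib)
    also have "\<dots> \<le> (2 * d\<^sup>2 / real n) * (mu\<^sup>2 / gam\<^sup>2)"
    proof (rule mult_right_mono)
      have "2 * d\<^sup>2 / real n \<ge> 2 * t" using dd n1 by (simp add: field_simps)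
      then show "t / 4 \<le> 2 * d\<^sup>2 / real n" using t by linarith
    qed (use q in auto)
    also have "\<dots> = 2 * d\<^sup>2 * mu\<^sup>2 / (real n * gam\<^sup>2)" by (simp add: field_simps)
    finally have "exp (-2 * d\<^sup>2 * mu\<^sup>2 / (real n * gam\<^sup>2)) \<le> exp (- ((mu / (2 * gam))\<^sup>2 * t))" by simp
    then show ?thesis using mB hb by linarith
  qed
qed


lemma Tn_le: "Tn C n \<omega> \<le> n"
  unfolding Tn_def Let_def by auto

lemma T_prop:
  assumes "Tn C n \<omega> + d \<le> n" "d \<ge> 1"
  shows "1 \<le> Tn C n \<omega> \<and> (Scnt C (Tn C n \<omega> + 1) \<omega> = nat \<lceil>real n / 2\<rceil> + 1
                         \<or> Rcnt C (Tn C n \<omega> + 1) \<omega> = nat \<lceil>real n / 2\<rceil> + 1)"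
proof -
  define P where "P k = (1 \<le> k \<and> (Scnt C (k+1) \<omega> = nat \<lceil>real n / 2\<rceil> + 1
                                    \<or> Rcnt C (k+1) \<omega> = nat \<lceil>real n / 2\<rceil> + 1))" for k
  have T: "Tn C n \<omega> = (if \<exists>k. P k then min n (LEAST k. P k) else n)"
    unfolding Tn_def Let_def P_def by simp
  have ex: "\<exists>k. P k" using assms T by (cases "\<exists>k. P k") auto
  then have T2: "Tn C n \<omega> = (LEAST k. P k)" using T assms by (auto simp: min_def split: if_splits)
  have "P (LEAST k. P k)" using ex by (rule LeastI_ex)
  then show ?thesis unfolding T2 P_def .
qed

lemma tail:
  assumes n: "n \<ge> 1"
  shows "measure M {\<omega>\<in>space M. Tn C n \<omega> + d \<le> n} \<le> 2 * exp (-2 * (real d)\<^sup>2 * mu\<^sup>2 / (real n * gam\<^sup>2))"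
    (is "measure M ?B \<le> _")
proof (cases "d = 0")
  case True
  have "measure M ?B \<le> 1" by simp
  then show ?thesis using True by (simp del: prob_le_1)
next
  case False
  then have d1: "d \<ge> 1" by simp
  define h where "h = nat \<lceil>real n / 2\<rceil>"
  have h2: "real n \<le> 2 * real h" unfolding h_def by linarith
  have h1: "h \<ge> 1" unfolding h_def using n by linarith
  have hit: "1 \<le> Tn C n \<omega> \<and> (Scnt C (Tn C n \<omega> + 1) \<omega> = h + 1 \<or> Rcnt C (Tn C n \<omega> + 1) \<omega> = h + 1)"
    if "\<omega> \<in> ?B" for \<omega>
    using T_prop[of n \<omega> d] that d1 unfolding h_def by auto
  have hdn: "h + d \<le> n" if "\<omega> \<in> ?B" for \<omega>
  proof -
    have "h + 1 \<le> Tn C n \<omega> + 1"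
      using hit[OF that] Rcnt_le[of C "Tn C n \<omega> + 1" \<omega>] RS_sum[of C "Tn C n \<omega> + 1" \<omega>] by auto
    then show ?thesis using that by auto
  qed
  show ?thesis
  proof (cases "h + d \<le> n")
    case False
    have e: "?B = {}" using hdn False by blast
    show ?thesis by (subst e) simp
  next
    case True
    define a where "a = n - d - h"
    have ar: "real a = real n - real d - real h" unfolding a_def using True by simp
    define B1 where "B1 = {\<omega>\<in>space M. Gam XR h \<omega> \<le> Gam XS a \<omega>}"
    define B2 where "B2 = {\<omega>\<in>space M. Gam XS h \<omega> \<le> Gam XR a \<omega>}"
    have B1m: "B1 \<in> sets M" unfolding B1_def by measurable
    have B2m: "B2 \<in> sets M" unfolding B2_def by measurable
    have "AE \<omega> in M. \<omega> \<in> ?B \<longrightarrow> \<omega> \<in> B1 \<union> B2"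
      using AE_space AE_good
    proof eventually_elim
      case (elim \<omega>)
      show ?case
      proof
        assume B: "\<omega> \<in> ?B"
        define m where "m = Tn C n \<omega> + 1"
        have mn: "m + d \<le> n + 1" using B unfolding m_def by simp
        have rs: "Rcnt C m \<omega> + Scnt C m \<omega> = m" by (rule RS_sum)
        from hit[OF B] have "Scnt C m \<omega> = h + 1 \<or> Rcnt C m \<omega> = h + 1" unfolding m_def by simp
        then show "\<omega> \<in> B1 \<union> B2"
        proof
          assume R: "Rcnt C m \<omega> = h + 1"
          have "Gam XR h \<omega> \<le> Gam XS (Scnt C m \<omega>) \<omega>"
            by (rule lemR[OF elim(1) elim(2) h1]) (use R in simp)
          also have "\<dots> \<le> Gam XS a \<omega>"
            using good_XS[OF elim(2)] R rs mn unfolding a_def by (intro Gam_mono) auto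
          finally show ?thesis unfolding B1_def using elim by auto
        next
          assume S: "Scnt C m \<omega> = h + 1"
          have "Gam XS h \<omega> \<le> Gam XR (Rcnt C m \<omega>) \<omega>"
            by (rule lemS[OF elim(1) elim(2) h1]) (use S in simp)
          also have "\<dots> \<le> Gam XR a \<omega>"
            using good_XR[OF elim(2)] S rs mn unfolding a_def by (intro Gam_mono) auto
          finally show ?thesis unfolding B2_def using elim by auto
        qed
      qed
    qed
    then have "measure M ?B \<le> measure M (B1 \<union> B2)"
      using B1m B2m by (intro measure_mono_AE') auto
    also have "\<dots> \<le> measure M B1 + measure M B2" using B1m B2m by (rule measure_Un_le)
    finally have mB: "measure M ?B \<le> measure M B1 + measure M B2" .
    have ah: "a \<le> h" using ar h2 by linarith
    have hb: "measure M B1 \<le> exp (-2 * (real d)\<^sup>2 * mu\<^sup>2 / (real n * gam\<^sup>2))"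
             "measure M B2 \<le> exp (-2 * (real d)\<^sup>2 * mu\<^sup>2 / (real n * gam\<^sup>2))"
      unfolding B1_def B2_def using ah ar h2 n True
      by (intro hoef_both; simp add: a_def; linarith)+
    show ?thesis using mB hb by linarith
  qed
qed


definition Y :: "nat \<Rightarrow> 'a \<Rightarrow> real" where
  "Y n \<omega> = ((real n - real (Tn C n \<omega>)) / sqrt (real n))\<^sup>2"

lemma Y_meas[measurable]: "Y n \<in> borel_measurable M"
  unfolding Y_def[abs_def] by measurable

lemma Y_nonneg: "Y n \<omega> \<ge> 0" unfolding Y_def by simp

lemma tailY:
  assumes n: "n \<ge> 1" and y: "y \<ge> 0"
  shows "measure M {\<omega>\<in>space M. Y n \<omega> > y} \<le> 2 * exp (-2 * (mu\<^sup>2 / gam\<^sup>2) * y)"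
proof -
  define d0 where "d0 = nat \<lceil>sqrt (real n * y)\<rceil>"
  have d0r: "real d0 \<ge> sqrt (real n * y)" unfolding d0_def by linarith
  have sub: "{\<omega>\<in>space M. Y n \<omega> > y} \<subseteq> {\<omega>\<in>space M. Tn C n \<omega> + d0 \<le> n}"
  proof safe
    fix \<omega> assume \<omega>: "\<omega> \<in> space M" and Yy: "Y n \<omega> > y"
    define D where "D = n - Tn C n \<omega>"
    have Dr: "real D = real n - real (Tn C n \<omega>)" unfolding D_def using Tn_le[of n \<omega>] by simp
    have "Y n \<omega> = (real D)\<^sup>2 / real n" unfolding Y_def Dr using n by (simp add: power_divide)
    then have e: "real n * Y n \<omega> = (real D)\<^sup>2" using n by (simp add: field_simps)
    have "real n * y < real n * Y n \<omega>" using Yy n by (intro mult_strict_left_mono) auto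
    then have "(real D)\<^sup>2 > real n * y" using e by simp
    then have "sqrt ((real D)\<^sup>2) > sqrt (real n * y)" by (simp only: real_sqrt_less_iff)
    then have "real D > sqrt (real n * y)" by simp
    then have "D \<ge> d0" unfolding d0_def by (simp add: nat_le_iff ceiling_le_iff)
    then show "Tn C n \<omega> + d0 \<le> n" unfolding D_def using Tn_le[of n \<omega>] by simp
  qed
  have "measure M {\<omega>\<in>space M. Y n \<omega> > y} \<le> measure M {\<omega>\<in>space M. Tn C n \<omega> + d0 \<le> n}"
    using sub by (intro finite_measure_mono) measurable
  also have "\<dots> \<le> 2 * exp (-2 * (real d0)\<^sup>2 * mu\<^sup>2 / (real n * gam\<^sup>2))" by (rule tail[OF n])
  also have "\<dots> \<le> 2 * exp (-2 * (mu\<^sup>2 / gam\<^sup>2) * y)"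
  proof -
    have "(real d0)\<^sup>2 \<ge> (sqrt (real n * y))\<^sup>2" using d0r y by (intro power_mono) auto
    then have dd: "(real d0)\<^sup>2 \<ge> real n * y" using n y by (simp add: zero_le_mult_iff)
    have g: "gam\<^sup>2 > 0" using gam_pos by simp
    have "(mu\<^sup>2 / gam\<^sup>2) * y = (mu\<^sup>2 / gam\<^sup>2) * (real n * y) / real n" using n by simp
    also have "\<dots> \<le> (mu\<^sup>2 / gam\<^sup>2) * (real d0)\<^sup>2 / real n"
      using dd n g by (intro divide_right_mono mult_left_mono) auto
    also have "\<dots> = (real d0)\<^sup>2 * mu\<^sup>2 / (real n * gam\<^sup>2)" by (simp add: field_simps)
    finally show ?thesis by simp
  qed
  finally show ?thesis .
qed

lemma UI_bound:
  assumes n: "n \<ge> 1" and K: "K \<ge> 0"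
  shows "(\<integral>\<^sup>+ \<omega>. ennreal \<bar>Y n \<omega>\<bar> * indicator {\<omega>. \<bar>Y n \<omega>\<bar> > K} \<omega> \<partial>M)
          \<le> ennreal (2 * exp (- (mu\<^sup>2 / gam\<^sup>2) * K) / (1 - exp (- (mu\<^sup>2 / gam\<^sup>2))))"
proof -
  define q where "q = mu\<^sup>2 / gam\<^sup>2"
  have q: "q > 0" unfolding q_def using mu_pos' gam_pos by simp
  define A where "A j = {\<omega>\<in>space M. Y n \<omega> > max (real j) K}" for j :: nat
  have Am: "A j \<in> sets M" for j unfolding A_def by measurable
  have pt: "ennreal \<bar>Y n \<omega>\<bar> * indicator {\<omega>. \<bar>Y n \<omega>\<bar> > K} \<omega> \<le> (\<Sum>j. indicator (A j) \<omega>)"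
    if \<omega>: "\<omega> \<in> space M" for \<omega>
  proof (cases "Y n \<omega> > K")
    case False
    then show ?thesis using Y_nonneg[of n \<omega>] by (simp add: indicator_def)
  next
    case True
    define N where "N = nat \<lceil>Y n \<omega>\<rceil>"
    have "ennreal \<bar>Y n \<omega>\<bar> * indicator {\<omega>. \<bar>Y n \<omega>\<bar> > K} \<omega> = ennreal (Y n \<omega>)"
      using True Y_nonneg[of n \<omega>] by (simp add: indicator_def)
    also have "\<dots> \<le> ennreal (real N)" unfolding N_def by (intro ennreal_leI) linarith
    also have "\<dots> = (\<Sum>j<N. (1::ennreal))" by (simp add: ennreal_of_nat_eq_real_of_nat)
    also have "\<dots> = (\<Sum>j<N. indicator (A j) \<omega>)"
    proof (intro sum.cong refl)
      fix j assume "j \<in> {..<N}"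
      then have "int j < \<lceil>Y n \<omega>\<rceil>" unfolding N_def by (simp add: zless_nat_eq_int_zless)
      then have "real j < Y n \<omega>" by (simp add: less_ceiling_iff)
      then show "(1::ennreal) = indicator (A j) \<omega>" using True \<omega> by (simp add: A_def indicator_def)
    qed
    also have "\<dots> \<le> (\<Sum>j. indicator (A j) \<omega>)" by (intro sum_le_suminf) auto
    finally show ?thesis .
  qed
  have "(\<integral>\<^sup>+ \<omega>. ennreal \<bar>Y n \<omega>\<bar> * indicator {\<omega>. \<bar>Y n \<omega>\<bar> > K} \<omega> \<partial>M)
        \<le> (\<integral>\<^sup>+ \<omega>. (\<Sum>j. indicator (A j) \<omega>) \<partial>M)"
    using pt by (intro nn_integral_mono) auto
  also have "\<dots> = (\<Sum>j. \<integral>\<^sup>+ \<omega>. indicator (A j) \<omega> \<partial>M)"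
    using Am by (intro nn_integral_suminf) auto
  also have "\<dots> = (\<Sum>j. emeasure M (A j))" using Am by simp
  also have "\<dots> \<le> (\<Sum>j. ennreal (2 * exp (- q * K) * exp (- q) ^ j))"
  proof (intro suminf_le allI)
    fix j :: nat
    have "measure M (A j) \<le> 2 * exp (-2 * q * max (real j) K)"
      unfolding A_def q_def using K by (intro tailY[OF n]) auto
    also have "\<dots> \<le> 2 * exp (- q * K) * exp (- q) ^ j"
    proof -
      have m2: "real j + K \<le> 2 * max (real j) K" by (simp add: max_def)
      have "q * (real j + K) \<le> q * (2 * max (real j) K)" using q m2 by (intro mult_left_mono) auto
      then have "-2 * q * max (real j) K \<le> - q * K + - q * real j" by (simp add: algebra_simps)
      then have "exp (-2 * q * max (real j) K) \<le> exp (- q * K + - q * real j)" by simp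
      also have "\<dots> = exp (- q * K) * exp (- q) ^ j" by (simp add: exp_add exp_of_nat_mult[symmetric] mult_ac exp_diff exp_minus field_simps)
      finally show ?thesis by simp
    qed
    finally show "emeasure M (A j) \<le> ennreal (2 * exp (- q * K) * exp (- q) ^ j)"
      using Am by (simp add: emeasure_eq_measure ennreal_leI)
  qed auto
  also have "\<dots> = ennreal (2 * exp (- q * K) / (1 - exp (- q)))"
  proof (rule suminf_ennreal_eq)
    have "exp (- q) < 1" using q by simp
    then have gs: "(\<lambda>j. exp (- q) ^ j) sums (1 / (1 - exp (- q)))" by (intro geometric_sums) simp
    then show "(\<lambda>j. 2 * exp (- q * K) * exp (- q) ^ j) sums (2 * exp (- q * K) / (1 - exp (- q)))"
      using sums_mult[OF gs, of "2 * exp (- q * K)"] by simp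
  qed simp
  finally show ?thesis unfolding q_def .
qed

lemma part2: "unif_integrable M {1..} Y"
  unfolding unif_integrable_def
proof (intro conjI ballI)
  show "\<And>n. Y n \<in> borel_measurable M" by measurable
  define q where "q = mu\<^sup>2 / gam\<^sup>2"
  have q: "q > 0" unfolding q_def using mu_pos' gam_pos by simp
  define G where "G K = ennreal (2 * exp (- q * K) / (1 - exp (- q)))" for K
  have lim_exp: "((\<lambda>K. exp (- q * K)) \<longlongrightarrow> 0) at_top"
  proof -
    have "filterlim (\<lambda>K. q * K) at_top at_top"
      by (rule filterlim_tendsto_pos_mult_at_top[OF tendsto_const q filterlim_ident])
    then have "filterlim (\<lambda>K. - (q * K)) at_bot at_top" by (simp add: filterlim_uminus_at_top)
    then show ?thesis using filterlim_compose[OF exp_at_bot] by simp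
  qed
  have "(G \<longlongrightarrow> ennreal (2 * 0 / (1 - exp (- q)))) at_top"
    unfolding G_def by (intro tendsto_ennrealI tendsto_divide tendsto_mult tendsto_const lim_exp) (use q in simp)
  then have G0: "(G \<longlongrightarrow> 0) at_top" by simp
  show "((\<lambda>K::real. SUP n\<in>{1..}. \<integral>\<^sup>+ \<omega>. ennreal \<bar>Y n \<omega>\<bar> * indicator {\<omega>. \<bar>Y n \<omega>\<bar> > K} \<omega> \<partial>M) \<longlongrightarrow> 0) at_top"
  proof (rule tendsto_sandwich[OF _ _ tendsto_const G0])
    show "\<forall>\<^sub>F K in at_top. (0::ennreal) \<le> (SUP n\<in>{1..}. \<integral>\<^sup>+ \<omega>. ennreal \<bar>Y n \<omega>\<bar> * indicator {\<omega>. \<bar>Y n \<omega>\<bar> > K} \<omega> \<partial>M)"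
      by simp
    show "\<forall>\<^sub>F K in at_top. (SUP n\<in>{1..}. \<integral>\<^sup>+ \<omega>. ennreal \<bar>Y n \<omega>\<bar> * indicator {\<omega>. \<bar>Y n \<omega>\<bar> > K} \<omega> \<partial>M) \<le> G K"
      unfolding eventually_at_top_linorder
    proof (intro exI[of _ 0] allI impI SUP_least)
      fix K :: real and n :: nat assume "0 \<le> K" "n \<in> {1..}"
      then show "(\<integral>\<^sup>+ \<omega>. ennreal \<bar>Y n \<omega>\<bar> * indicator {\<omega>. \<bar>Y n \<omega>\<bar> > K} \<omega> \<partial>M) \<le> G K"
        unfolding G_def q_def by (intro UI_bound) auto
    qed
  qed
qed

end

theorem lemma4p3:
  fixes M :: "'a measure" and F0 :: "'a measure"
    and r s :: "nat \<Rightarrow> real"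
    and LR LS :: "nat \<Rightarrow> 'a \<Rightarrow> nat"
    and C :: "nat \<Rightarrow> 'a \<Rightarrow> bool"
  assumes P: "prob_space M"
    and r_nonneg: "\<forall>i\<ge>1. r i \<ge> 0" and r_sum: "(\<lambda>i. r (Suc i)) sums 1"
    and s_nonneg: "\<forall>i\<ge>1. s i \<ge> 0" and s_sum: "(\<lambda>i. s (Suc i)) sums 1"
    and mu_pos: "(\<Sum>i. r (Suc i) * s (Suc i)) > 0"
    and F0: "space F0 = space M"
    and indep: "prob_space.indep_sets M
        (\<lambda>x. case x of Rand \<Rightarrow> sets F0
                 | LabR n \<Rightarrow> {LR n -` A \<inter> space M | A. True}
                 | LabS n \<Rightarrow> {LS n -` A \<inter> space M | A. True})
        ({Rand} \<union> {LabR n | n. n \<ge> 1} \<union> {LabS n | n. n \<ge> 1})"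
    and distR: "\<forall>n\<ge>1. \<forall>i\<ge>1. measure M {\<omega>\<in>space M. LR n \<omega> = i} = r i"
    and distS: "\<forall>n\<ge>1. \<forall>i\<ge>1. measure M {\<omega>\<in>space M. LS n \<omega> = i} = s i"
    and policy: "reading_policy M F0 C LR LS"
    and greedy: "greedy M r s C LR LS"
  defines "\<mu> \<equiv> (\<Sum>i. r (Suc i) * s (Suc i))"
    and "\<gamma> \<equiv> max (SUP i\<in>{1..}. r i) (SUP i\<in>{1..}. s i)"
  shows "(\<forall>t\<ge>1. \<forall>n::nat. real n \<ge> (2 + \<gamma> / \<mu>)\<^sup>2 \<longrightarrow>
            measure M {\<omega>\<in>space M. \<bar>(real (Rcnt C n \<omega>) - real n / 2) / sqrt (real n)\<bar> > t}
              \<le> 2 * exp (- ((\<mu> / (2 * \<gamma>))\<^sup>2 * t)))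
       \<and> unif_integrable M {1..}
           (\<lambda>n \<omega>. ((real n - real (Tn C n \<omega>)) / sqrt (real n))\<^sup>2)"
proof -
  have L: "lab_pol M F0 r s LR LS C"
    unfolding lab_pol_def lab_def lab_axioms_def lab_pol_axioms_def
    using P r_nonneg r_sum s_nonneg s_sum mu_pos F0 indep distR distS policy greedy by blast
  interpret lab_pol M F0 r s LR LS C by (rule L)
  have mu_eq: "\<mu> = mu" unfolding \<mu>_def mu_def ..
  have gam_eq: "\<gamma> = gam" unfolding \<gamma>_def gam_def ..
  show ?thesis
    unfolding mu_eq gam_eq
    using part1 part2 unfolding Y_def[abs_def] by blast
qed

end
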